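(* Let $d,\ell\ge1$, let $a\in\mathbb{R}^d$, and let $\mathbf{A}=\mathbf{S}+ae_d^T\in\mathbb{R}^{d\times d}$ be the companion matrix with last column $a$. Let $\mathbf{B}\in\mathbb{R}^{d}$ (a column), $\mathbf{C}\in\mathbb{R}^{1\times d}$, and $\tilde{\mathbf{C}}=\mathbf{C}(\mathbf{I}-\mathbf{A}^\ell)\in\mathbb{R}^{d}$. Let $\omega=\exp(-2\pi i/\ell)$ and assume $\mathbf{I}-\omega^m\mathbf{A}$ is invertible for every $m=0,\dots,\ell-1$. Consider the following algorithm (Algorithm 1). 1. For $u,v\in\mathbb{R}^d$ define $\mathrm{quad}(u,v)\in\mathbb{C}^\ell$ by: form $q\in\mathbb{R}^d$ with $q_k=\sum_{j=1}^{d-k}u_{j+k}v_j$ for $k=0,\dots,d-1$; zero-pad $q$ to length $\ell\lceil d/\ell\rceil$; split it into $\lceil d/\ell\rceil$ consecutive chunks $q^{(1)},\dots,q^{(\lceil d/\ell\rceil)}$ of length $\ell$; return the length-$\ell$ discrete Fourier transform $\mathcal{F}_\ell(q^{(1)}+\dots+q^{(\lceil d/\ell\rceil)})$, where $\mathcal{F}_\ell(w)[m]=\sum_{k=0}^{\ell-1}w_k\omega^{mk}$. 2. Compute $z=(\bar\omega^0,\bar\omega^1,\dots,\bar\omega^{\ell-1})$. 3. Compute, entrywise for $m=0,\dots,\ell-1$, $$\tilde{\mathbf{F}}^y=\mathrm{quad}(\tilde{\mathbf{C}},\mathbf{B})+\frac{\mathrm{quad}(\tilde{\mathbf{C}},a)\cdot\mathrm{quad}(e_d,\mathbf{B})}{z-\mathrm{quad}(e_d,a)}\in\mathbb{C}^\ell.$$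 4. Return $\mathbf{F}^y=\mathcal{F}_\ell^{-1}(\tilde{\mathbf{F}}^y)$. Then Algorithm 1 returns the output filter $\mathbf{F}^y=(\mathbf{C}\mathbf{B},\mathbf{C}\mathbf{A}\mathbf{B},\mathbf{C}\mathbf{A}^2\mathbf{B},\dots,\mathbf{C}\mathbf{A}^{\ell-1}\mathbf{B})$.
   Context: $\mathbf{S}$ denotes the $d\times d$ down-shift matrix (ones on the first subdiagonal, zeros elsewhere), $e_d=(0,\dots,0,1)^T$ is the $d$-th standard basis vector, and $\mathbf{I}$ is the identity. $\mathcal{F}_\ell^{-1}$ is the inverse of the length-$\ell$ DFT $\mathcal{F}_\ell$. The division and product in step 3 are entrywise. *)

theory Defs
  imports Complex_Main "Jordan_Normal_Form.Matrix"
begin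

(* Indices are 0-based: entry i of a length-d vector is x $ i, 0 <= i < d. *)

definition omega :: "nat \<Rightarrow> complex" where
  "omega l = exp (- 2 * of_real pi * \<i> / of_nat l)"

definition shift_mat :: "nat \<Rightarrow> real mat" where
  "shift_mat d = mat d d (\<lambda>(i, j). if i = j + 1 then 1 else 0)"

definition companion :: "nat \<Rightarrow> real vec \<Rightarrow> real mat" where
  "companion d a = shift_mat d + mat d d (\<lambda>(i, j). a $ i * (unit_vec d (d - 1)) $ j)"

definition dft :: "nat \<Rightarrow> complex vec \<Rightarrow> complex vec" where
  "dft l w = vec l (\<lambda>m. \<Sum>k<l. w $ k * omega l ^ (m * k))"

definition idft :: "nat \<Rightarrow> complex vec \<Rightarrow> complex vec" where
  "idft l W = vec l (\<lambda>k. (1 / of_nat l) * (\<Sum>m<l. W $ m * cnj (omega l) ^ (m * k)))"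

definition quad_q :: "nat \<Rightarrow> real vec \<Rightarrow> real vec \<Rightarrow> real vec" where
  "quad_q d u v = vec d (\<lambda>k. \<Sum>j<d - k. u $ (j + k) * v $ j)"

definition num_chunks :: "nat \<Rightarrow> nat \<Rightarrow> nat" where
  "num_chunks d l = nat \<lceil>real d / real l\<rceil>"

definition zero_pad :: "nat \<Rightarrow> real vec \<Rightarrow> real vec" where
  "zero_pad n q = vec n (\<lambda>i. if i < dim_vec q then q $ i else 0)"

definition chunk_sum :: "nat \<Rightarrow> nat \<Rightarrow> real vec \<Rightarrow> real vec" where
  "chunk_sum l nc p = vec l (\<lambda>k. \<Sum>c<nc. p $ (c * l + k))"

definition quad :: "nat \<Rightarrow> nat \<Rightarrow> real vec \<Rightarrow> real vec \<Rightarrow> complex vec" where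
  "quad d l u v =
     (let q = quad_q d u v;
          nc = num_chunks d l;
          p = zero_pad (l * nc) q
      in dft l (map_vec complex_of_real (chunk_sum l nc p)))"

definition algorithm1 :: "nat \<Rightarrow> nat \<Rightarrow> real vec \<Rightarrow> real vec \<Rightarrow> real mat \<Rightarrow> complex vec" where
  "algorithm1 d l a B C =
     (let A = companion d a;
          Ct = row (C * (1\<^sub>m d - A ^\<^sub>m l)) 0;
          ed = unit_vec d (d - 1);
          z = vec l (\<lambda>m. cnj (omega l) ^ m);
          q1 = quad d l Ct B; q2 = quad d l Ct a; q3 = quad d l ed B; q4 = quad d l ed a;
          Fy = vec l (\<lambda>m. q1 $ m + q2 $ m * q3 $ m / (z $ m - q4 $ m))
      in idft l Fy)"

end

theory Submission
  imports Defs
begin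


lemma omega_cis: "omega l = cis (- 2 * pi / real l)"
  unfolding omega_def cis_conv_exp by (simp add: field_simps)

lemma omega_pow: "omega l ^ n = cis (- 2 * pi * real n / real l)"
  unfolding omega_cis DeMoivre by (simp add: field_simps)

lemma omega_pow_l: assumes "l \<ge> 1" shows "omega l ^ l = 1"
  using assms unfolding omega_pow by (simp add: complex_eq_iff)

lemma omega_norm: "cnj (omega l) * omega l = 1"
  unfolding omega_cis by (simp add: cis_cnj cis_mult)

lemma omega_nz: "omega l \<noteq> 0"
  unfolding omega_cis by simp

lemma omega_pow_ne1: assumes "0 < n" "n < l" shows "omega l ^ n \<noteq> 1"
proof
  assume "omega l ^ n = 1"
  hence "cos (- 2 * pi * real n / real l) = 1" unfolding omega_pow by (simp add: complex_eq_iff)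
  then obtain k :: int where k: "- 2 * pi * real n / real l = of_int k * 2 * pi" using cos_one_2pi_int by blast
  hence "pi * (- real n) = pi * (of_int k * real l)" using assms by (simp add: field_simps)
  hence "- real n = of_int k * real l" using pi_neq_zero mult_left_cancel by blast
  hence "- real n / real l = of_int k" using assms by (simp add: field_simps)
  moreover have "0 < real n / real l" "real n / real l < 1" using assms by auto
  ultimately have "real_of_int k < 0" "real_of_int k > -1" by linarith+
  hence "k < 0" "k > -1" by linarith+
  thus False by linarith
qed

lemma omega_root_ne1: assumes "k < l" "j < l" "k \<noteq> j"
  shows "omega l ^ k * cnj (omega l) ^ j \<noteq> 1"
proof (cases "j < k")
  case True
  have "omega l ^ k * cnj (omega l) ^ j = omega l ^ (k - j) * (omega l * cnj (omega l)) ^ j"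
    using True by (simp add: power_mult_distrib power_add[symmetric])
  also have "\<dots> = omega l ^ (k - j)" using omega_norm[of l] by (simp add: mult.commute)
  finally show ?thesis using omega_pow_ne1[of "k - j" l] True assms by auto
next
  case False
  hence kj: "k < j" using assms by auto
  have "omega l ^ k * cnj (omega l) ^ j = cnj (omega l) ^ (j - k) * (omega l * cnj (omega l)) ^ k"
    using kj by (simp add: power_mult_distrib power_add[symmetric])
  also have "\<dots> = cnj (omega l ^ (j - k))" using omega_norm[of l] by (simp add: mult.commute)
  moreover have ne: "omega l ^ (j - k) \<noteq> 1" using omega_pow_ne1[of "j - k" l] kj assms by auto
  ultimately show ?thesis by (metis complex_cnj_cnj complex_cnj_one)
qed

lemma omega_geo: assumes "k < l" "j < l"
  shows "(\<Sum>m<l. (omega l ^ k * cnj (omega l) ^ j) ^ m) = (if k = j then of_nat l else 0)"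
proof (cases "k = j")
  case True
  have "omega l ^ k * cnj (omega l) ^ j = 1"
    using True omega_norm[of l] by (simp add: power_mult_distrib[symmetric] mult.commute)
  thus ?thesis using True by simp
next
  case False
  let ?r = "omega l ^ k * cnj (omega l) ^ j"
  have l1: "l \<ge> 1" using assms by auto
  have "?r ^ l = (omega l ^ l) ^ k * cnj (omega l ^ l) ^ j"
    by (simp add: power_mult_distrib power_mult[symmetric] mult.commute)
  also have "\<dots> = 1" using omega_pow_l[OF l1] by simp
  finally have "?r ^ l = 1" .
  thus ?thesis using omega_root_ne1[OF assms False] False by (simp add: sum_gp_strict)
qed

lemma idft_dft: assumes "l \<ge> 1"
  shows "idft l (vec l (\<lambda>m. \<Sum>k<l. h k * omega l ^ (m * k))) = vec l h"
proof (rule eq_vecI)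
  fix j assume j: "j < dim_vec (vec l h)"
  hence j: "j < l" by simp
  have "(\<Sum>m<l. (\<Sum>k<l. h k * omega l ^ (m * k)) * cnj (omega l) ^ (m * j))
      = (\<Sum>k<l. h k * (\<Sum>m<l. (omega l ^ k * cnj (omega l) ^ j) ^ m))"
  proof -
    have "(\<Sum>m<l. (\<Sum>k<l. h k * omega l ^ (m * k)) * cnj (omega l) ^ (m * j))
      = (\<Sum>m<l. \<Sum>k<l. h k * (omega l ^ k * cnj (omega l) ^ j) ^ m)"
      unfolding sum_distrib_right
      by (intro sum.cong refl) (simp add: power_mult_distrib power_mult[symmetric] mult.commute)
    also have "\<dots> = (\<Sum>k<l. \<Sum>m<l. h k * (omega l ^ k * cnj (omega l) ^ j) ^ m)"
      by (rule sum.swap)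
    finally show ?thesis by (simp add: sum_distrib_left)
  qed
  also have "\<dots> = (\<Sum>k<l. h k * (if k = j then of_nat l else 0))"
    by (rule sum.cong) (use j in \<open>auto simp: omega_geo\<close>)
  also have "\<dots> = h j * of_nat l" using j by (simp add: if_distrib sum.delta cong: if_cong)
  finally show "idft l (vec l (\<lambda>m. \<Sum>k<l. h k * omega l ^ (m * k))) $ j = vec l h $ j"
    unfolding idft_def using j assms by simp
qed (simp add: idft_def)



lemma sum_chunks: fixes nc l :: nat shows "(\<Sum>c<nc. \<Sum>k<l. g (c * l + k)) = (\<Sum>i<nc * l. g i)"
proof (induction nc)
  case (Suc nc)
  have "(\<Sum>i<Suc nc * l. g i) = (\<Sum>i<nc * l. g i) + (\<Sum>i\<in>{nc*l..<nc*l + l}. g i)"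
    by (simp add: sum.atLeastLessThan_concat[symmetric] lessThan_atLeast0 add.commute)
  also have "(\<Sum>i\<in>{nc*l..<nc*l + l}. g i) = (\<Sum>k<l. g (nc * l + k))"
    using sum.shift_bounds_nat_ivl[of g 0 "nc*l" l] by (simp add: lessThan_atLeast0 add.commute)
  finally show ?case using Suc by simp
qed simp

lemma nc_bound: assumes "l \<ge> 1" shows "d \<le> l * num_chunks d l"
proof -
  have "real d / real l \<le> of_int \<lceil>real d / real l\<rceil>" by (rule le_of_int_ceiling)
  hence "real l * (real d / real l) \<le> real l * of_int \<lceil>real d / real l\<rceil>"
    by (intro mult_left_mono) auto
  hence "real d \<le> real l * of_int \<lceil>real d / real l\<rceil>" using assms by simp
  moreover have "0 \<le> real d / real l" by simp
  hence "\<lceil>real d / real l\<rceil> \<ge> 0" by linarith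
  ultimately have "real d \<le> real l * real (num_chunks d l)" unfolding num_chunks_def by simp
  thus ?thesis by (metis of_nat_le_iff of_nat_mult)
qed

lemma quad_eq: assumes "l \<ge> 1" "m < l"
  shows "quad d l u v $ m = (\<Sum>n<d. of_real (\<Sum>j<d - n. u $ (j + n) * v $ j) * omega l ^ (m * n))"
proof -
  define nc where "nc = num_chunks d l"
  define G where "G n = of_real (\<Sum>j<d - n. u $ (j + n) * v $ j) * omega l ^ (m * n)" for n
  define P where "P i = (if i < d then G i else 0)" for i
  have per: "omega l ^ (m * (c * l + k)) = omega l ^ (m * k)" for c k
  proof -
    have "omega l ^ (m * (c * l + k)) = (omega l ^ l) ^ (m * c) * omega l ^ (m * k)"
      by (simp add: power_add[symmetric] power_mult[symmetric] algebra_simps)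
    thus ?thesis using omega_pow_l[OF assms(1)] by simp
  qed
  have "quad d l u v $ m = (\<Sum>k<l. (\<Sum>c<nc. P (c * l + k)))"
    unfolding quad_def Let_def dft_def nc_def[symmetric] using assms
    apply (simp add: chunk_sum_def zero_pad_def quad_q_def sum_distrib_right)
    apply (intro sum.cong refl)
    subgoal premises a for k c
    proof -
      have "c * l + k < c * l + l" using a by simp
      also have "\<dots> = Suc c * l" by simp
      also have "\<dots> \<le> nc * l" using a by (intro mult_right_mono) auto
      finally have idx: "c * l + k < l * nc" by (simp add: mult.commute)
      show ?thesis using idx per[of c k] by (simp add: P_def G_def)
    qed
    done
  also have "\<dots> = (\<Sum>i<nc * l. P i)"
    by (subst sum.swap) (rule sum_chunks)
  also have "\<dots> = (\<Sum>i<d. G i)"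
  proof -
    have "d \<le> nc * l" using nc_bound[OF assms(1)] unfolding nc_def by (simp add: mult.commute)
    thus ?thesis unfolding P_def
      by (intro sum.mono_neutral_cong_right) auto
  qed
  finally show ?thesis unfolding G_def .
qed



definition tri :: "complex \<Rightarrow> (nat \<Rightarrow> complex) \<Rightarrow> nat \<Rightarrow> complex" where
  "tri x g i = (\<Sum>n\<le>i. x ^ n * g (i - n))"

lemma tri_0: "tri x g 0 = g 0" by (simp add: tri_def)

lemma tri_Suc: "tri x g (Suc i) = g (Suc i) + x * tri x g i"
  unfolding tri_def by (subst sum.atMost_Suc_shift) (simp add: sum_distrib_left mult.assoc)

lemma triangle: "(\<Sum>n<d. (\<Sum>j<d - n. U (j + n) * V j) * x ^ n) = (\<Sum>k<d. U k * tri x V k)"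
proof -
  have "(\<Sum>n<d. (\<Sum>j<d - n. U (j + n) * V j) * x ^ n)
      = (\<Sum>(n, j)\<in>{(n, j). n + j < d}. U (j + n) * V j * x ^ n)"
  proof -
    have "{(n, j). n + j < d} = Sigma {..<d} (\<lambda>n. {..<d - n})" by auto
    thus ?thesis by (simp add: sum.Sigma sum_distrib_right)
  qed
  also have "\<dots> = (\<Sum>k<d. \<Sum>n\<le>k. U (k - n + n) * V (k - n) * x ^ n)"
    by (rule sum.triangle_reindex)
  also have "\<dots> = (\<Sum>k<d. U k * tri x V k)"
    unfolding tri_def sum_distrib_left
    by (intro sum.cong refl) (simp add: mult.commute mult.left_commute)
  finally show ?thesis .
qed

definition Acm :: "nat \<Rightarrow> real vec \<Rightarrow> complex mat" where
  "Acm d a = map_mat complex_of_real (companion d a)"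

lemma Acm_carrier: "Acm d a \<in> carrier_mat d d"
  unfolding Acm_def companion_def shift_mat_def by simp

lemma Acm_index: "i < d \<Longrightarrow> j < d \<Longrightarrow> Acm d a $$ (i, j) =
   (if i = j + 1 then 1 else 0) + (if j = d - 1 then of_real (a $ i) else 0)"
  unfolding Acm_def companion_def shift_mat_def by simp

lemma t1: "i < d \<Longrightarrow> j < d \<Longrightarrow> Acm d a $$ (i, j) * Z $ j = (if i = j + 1 then Z $ j else 0) + (if j = d - 1 then of_real (a $ i) * Z $ j else 0)"
  by (simp add: Acm_index distrib_right)
lemma Acm_mult: assumes "Z \<in> carrier_vec d" "i < d"
  shows "(Acm d a *\<^sub>v Z) $ i = (if i = 0 then 0 else Z $ (i - 1)) + of_real (a $ i) * Z $ (d - 1)"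
proof -
  have "(Acm d a *\<^sub>v Z) $ i = (\<Sum>j<d. Acm d a $$ (i, j) * Z $ j)"
    using assms Acm_carrier[of d a] by (simp add: scalar_prod_def row_def lessThan_atLeast0)
  also have "\<dots> = (\<Sum>j<d. (if i = j + 1 then Z $ j else 0)) + (\<Sum>j<d. if j = d - 1 then of_real (a $ i) * Z $ j else 0)"
    unfolding sum.distrib[symmetric] using assms by (intro sum.cong refl) (simp add: t1)
  also have "(\<Sum>j<d. (if i = j + 1 then Z $ j else 0)) = (if i = 0 then 0 else Z $ (i - 1))"
  proof (cases i)
    case (Suc i')
    have "(\<Sum>j<d. (if i = j + 1 then Z $ j else 0)) = (\<Sum>j<d. (if j = i' then Z $ j else 0))"
      using Suc by (intro sum.cong refl) auto
    also have "\<dots> = Z $ i'" using Suc assms by (simp add: sum.delta')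
    finally show ?thesis using Suc by simp
  qed simp
  also have "(\<Sum>j<d. if j = d - 1 then of_real (a $ i) * Z $ j else 0) = of_real (a $ i) * Z $ (d - 1)"
    using assms by (simp add: sum.delta')
  finally show ?thesis .
qed

lemma M_tri: assumes "i < d"
  shows "((1\<^sub>m d - x \<cdot>\<^sub>m Acm d a) *\<^sub>v vec d (tri x g)) $ i = g i - x * of_real (a $ i) * tri x g (d - 1)"
proof -
  let ?Z = "vec d (tri x g)"
  have "((1\<^sub>m d - x \<cdot>\<^sub>m Acm d a) *\<^sub>v ?Z) = ?Z - x \<cdot>\<^sub>v (Acm d a *\<^sub>v ?Z)"
    using Acm_carrier[of d a] by (subst minus_mult_distrib_mat_vec) (auto intro!: eq_vecI)
  hence "((1\<^sub>m d - x \<cdot>\<^sub>m Acm d a) *\<^sub>v ?Z) $ i = tri x g i - x * (Acm d a *\<^sub>v ?Z) $ i"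
    using assms Acm_carrier[of d a] by simp
  also have "\<dots> = g i - x * of_real (a $ i) * tri x g (d - 1)"
    using assms by (cases i) (auto simp: Acm_mult tri_0 tri_Suc algebra_simps)
  finally show ?thesis .
qed



lemma inv_kernel: fixes M :: "complex mat"
  assumes inv: "invertible_mat M" and M: "M \<in> carrier_mat d d" and W: "W \<in> carrier_vec d"
    and MW: "M *\<^sub>v W = 0\<^sub>v d"
  shows "W = 0\<^sub>v d"
proof -
  obtain N where N1: "M * N = 1\<^sub>m (dim_row M)" and N2: "N * M = 1\<^sub>m (dim_row N)"
    using inv unfolding invertible_mat_def inverts_mat_def by blast
  have "dim_col N = d" using N1 M by (metis index_mult_mat(3) index_one_mat(3) carrier_matD(1))
  moreover have "dim_row N = d" using N2 M by (metis index_mult_mat(3) index_one_mat(3) carrier_matD(2))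
  ultimately have Nc: "N \<in> carrier_mat d d" by auto
  have "W = 1\<^sub>m d *\<^sub>v W" using W by simp
  also have "\<dots> = (N * M) *\<^sub>v W" using N2 Nc by simp
  also have "\<dots> = N *\<^sub>v (M *\<^sub>v W)" using Nc M W by simp
  also have "\<dots> = 0\<^sub>v d" unfolding MW using Nc by (intro eq_vecI) auto
  finally show ?thesis .
qed

lemma tri_lin: "tri x (\<lambda>j. f j + c * h j) i = tri x f i + c * tri x h i"
  unfolding tri_def by (simp add: algebra_simps sum.distrib sum_distrib_left)

lemma quad_tri: assumes "l \<ge> 1" "m < l"
  shows "quad d l u v $ m = (\<Sum>k<d. of_real (u $ k) * tri (omega l ^ m) (\<lambda>j. of_real (v $ j)) k)"
  unfolding quad_eq[OF assms] triangle[symmetric, where U = "\<lambda>k. of_real (u $ k)"]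
  by (simp add: power_mult sum_distrib_right mult.assoc)

lemma quad_ed: assumes "l \<ge> 1" "m < l" "d \<ge> 1"
  shows "quad d l (unit_vec d (d - 1)) v $ m = tri (omega l ^ m) (\<lambda>j. of_real (v $ j)) (d - 1)"
proof -
  let ?t = "tri (omega l ^ m) (\<lambda>j. of_real (v $ j))"
  have "(\<Sum>k<d. of_real (unit_vec d (d - 1) $ k) * ?t k) = (\<Sum>k<d. if k = d - 1 then ?t k else 0)"
    by (intro sum.cong refl) auto
  also have "\<dots> = ?t (d - 1)" using assms by (simp add: sum.delta')
  finally show ?thesis unfolding quad_tri[OF assms(1,2)] .
qed

lemma map_row: assumes "C \<in> carrier_mat 1 d"  "P \<in> carrier_mat d d" "k < d"
  shows "complex_of_real (row (C * P) 0 $ k) = row (map_mat complex_of_real C * map_mat complex_of_real P) 0 $ k"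
proof -
  have "complex_of_real (row (C * P) 0 $ k) = map_mat complex_of_real (C * P) $$ (0, k)"
    using assms by (simp add: row_def)
  also have "\<dots> = row (map_mat complex_of_real (C * P)) 0 $ k"
    using assms by (simp add: row_def)
  finally show ?thesis by (simp only: of_real_hom.mat_hom_mult[OF assms(1,2)])
qed



lemma smult_mat_vec: fixes A :: "complex mat"
  assumes "A \<in> carrier_mat d d" "Y \<in> carrier_vec d"
  shows "(x \<cdot>\<^sub>m A) *\<^sub>v Y = x \<cdot>\<^sub>v (A *\<^sub>v Y)"
  using assms by (intro eq_vecI) auto

lemma M_split: fixes A :: "complex mat"
  assumes "A \<in> carrier_mat d d" "Y \<in> carrier_vec d"
  shows "(1\<^sub>m d - x \<cdot>\<^sub>m A) *\<^sub>v Y = Y - x \<cdot>\<^sub>v (A *\<^sub>v Y)"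
  using assms by (subst minus_mult_distrib_mat_vec) (auto simp: smult_mat_vec)

lemma main_m:
  fixes d l m :: nat and a B :: "real vec" and C :: "real mat"
  assumes d1: "d \<ge> 1" and l1: "l \<ge> 1" and ml: "m < l"
    and da: "dim_vec a = d" and dB: "dim_vec B = d" and Cc: "C \<in> carrier_mat 1 d"
    and inv: "invertible_mat (1\<^sub>m d - omega l ^ m \<cdot>\<^sub>m Acm d a)"
  shows "quad d l (row (C * (1\<^sub>m d - companion d a ^\<^sub>m l)) 0) B $ m
      + quad d l (row (C * (1\<^sub>m d - companion d a ^\<^sub>m l)) 0) a $ m * quad d l (unit_vec d (d - 1)) B $ m
        / (cnj (omega l) ^ m - quad d l (unit_vec d (d - 1)) a $ m)
     = (\<Sum>k<l. complex_of_real ((C *\<^sub>v ((companion d a ^\<^sub>m k) *\<^sub>v B)) $ 0) * omega l ^ (m * k))"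
proof -
  define Ct where "Ct = row (C * (1\<^sub>m d - companion d a ^\<^sub>m l)) 0"
  define x where "x = omega l ^ m"
  define A where "A = Acm d a"
  define M where "M = 1\<^sub>m d - x \<cdot>\<^sub>m A"
  define P where "P = companion d a"
  have Pc: "P \<in> carrier_mat d d" unfolding P_def companion_def shift_mat_def by simp
  have Ac: "A \<in> carrier_mat d d" unfolding A_def by (rule Acm_carrier)
  have Mc: "M \<in> carrier_mat d d" unfolding M_def using Ac by (intro minus_carrier_mat) auto
  have AP: "A = map_mat complex_of_real P" unfolding A_def Acm_def P_def ..
  have xnz: "x \<noteq> 0" unfolding x_def using omega_nz by simp
  have xl: "x ^ l = 1"
  proof -
    have "x ^ l = omega l ^ (m * l)" unfolding x_def by (simp only: power_mult)
    also have "\<dots> = omega l ^ (l * m)" by (simp only: mult.commute)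
    also have "\<dots> = (omega l ^ l) ^ m" by (simp only: power_mult)
    also have "\<dots> = 1" using omega_pow_l[OF l1] by simp
    finally show ?thesis .
  qed
  have z: "cnj (omega l) ^ m = 1 / x"
  proof -
    have "cnj (omega l) = 1 / omega l" using omega_norm[of l] omega_nz[of l] by (simp add: field_simps)
    thus ?thesis unfolding x_def by (simp add: power_one_over)
  qed
  define Bc where "Bc j = complex_of_real (B $ j)" for j
  define ac where "ac j = complex_of_real (a $ j)" for j
  define q3 where "q3 = tri x Bc (d - 1)"
  define q4 where "q4 = tri x ac (d - 1)"
  have Q3: "quad d l (unit_vec d (d - 1)) B $ m = q3"
    unfolding q3_def Bc_def x_def by (rule quad_ed[OF l1 ml d1])
  have Q4: "quad d l (unit_vec d (d - 1)) a $ m = q4"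
    unfolding q4_def ac_def x_def by (rule quad_ed[OF l1 ml d1])
  have nd: "1 - x * q4 \<noteq> 0"
  proof
    assume h: "1 - x * q4 = 0"
    let ?W = "vec d (tri x ac)"
    have "M *\<^sub>v ?W = 0\<^sub>v d"
    proof (rule eq_vecI)
      fix i assume "i < dim_vec (0\<^sub>v d :: complex vec)"
      hence i: "i < d" by simp
      have "(M *\<^sub>v ?W) $ i = ac i - x * ac i * q4"
        unfolding M_def A_def using M_tri[OF i, of x a ac] unfolding ac_def q4_def by simp
      also have "\<dots> = ac i * (1 - x * q4)" by (simp add: algebra_simps)
      finally show "(M *\<^sub>v ?W) $ i = 0\<^sub>v d $ i" using h i by simp
    qed (use Mc in simp)
    hence "?W = 0\<^sub>v d" using inv_kernel[of M d ?W] inv Mc unfolding M_def A_def x_def by simp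
    hence "?W $ (d - 1) = 0" using d1 by simp
    hence "q4 = 0" unfolding q4_def using d1 by simp
    thus False using h by simp
  qed
  define s where "s = q3 / (1 - x * q4)"
  define g where "g j = Bc j + (x * s) * ac j" for j
  define Y where "Y = vec d (tri x g)"
  have Yc: "Y \<in> carrier_vec d" unfolding Y_def by simp
  have Yd: "tri x g (d - 1) = s"
  proof -
    have "tri x g (d - 1) = q3 + x * s * q4" unfolding g_def tri_lin q3_def q4_def ..
    also have "\<dots> = s" using nd unfolding s_def by (simp add: field_simps)
    finally show ?thesis .
  qed
  have MY: "M *\<^sub>v Y = map_vec complex_of_real B"
  proof (rule eq_vecI)
    fix i assume "i < dim_vec (map_vec complex_of_real B)"
    hence i: "i < d" using dB by simp
    have "(M *\<^sub>v Y) $ i = g i - x * ac i * s"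
      unfolding M_def A_def Y_def using M_tri[OF i, of x a g] Yd unfolding ac_def by simp
    also have "\<dots> = Bc i" unfolding g_def by (simp add: algebra_simps)
    finally show "(M *\<^sub>v Y) $ i = map_vec complex_of_real B $ i" using i dB Bc_def by simp
  qed (use Mc dB in simp)
  define Cm where "Cm = map_mat complex_of_real C"
  have Cmc: "Cm \<in> carrier_mat 1 d" unfolding Cm_def using Cc by simp
  define f where "f k = (Cm *\<^sub>v (A ^\<^sub>m k *\<^sub>v Y)) $ 0" for k
  have hk: "complex_of_real ((C *\<^sub>v ((P ^\<^sub>m k) *\<^sub>v B)) $ 0) = f k - x * f (Suc k)" for k
  proof -
    have Bv: "B \<in> carrier_vec d" using dB by auto
    have Pk: "P ^\<^sub>m k \<in> carrier_mat d d" using Pc by simp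
    have Ak: "A ^\<^sub>m k \<in> carrier_mat d d" using Ac by simp
    have "map_vec complex_of_real (C *\<^sub>v ((P ^\<^sub>m k) *\<^sub>v B))
        = Cm *\<^sub>v map_vec complex_of_real ((P ^\<^sub>m k) *\<^sub>v B)"
      unfolding Cm_def using Pk Bv by (intro of_real_hom.mult_mat_vec_hom[OF Cc]) simp
    also have "map_vec complex_of_real ((P ^\<^sub>m k) *\<^sub>v B) = A ^\<^sub>m k *\<^sub>v map_vec complex_of_real B"
      unfolding AP of_real_hom.mat_hom_pow[OF Pc, symmetric] by (rule of_real_hom.mult_mat_vec_hom[OF Pk Bv])
    also have "map_vec complex_of_real B = Y - x \<cdot>\<^sub>v (A *\<^sub>v Y)"
      unfolding MY[symmetric] M_def by (rule M_split[OF Ac Yc])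
    also have "A ^\<^sub>m k *\<^sub>v (Y - x \<cdot>\<^sub>v (A *\<^sub>v Y)) = A ^\<^sub>m k *\<^sub>v Y - x \<cdot>\<^sub>v (A ^\<^sub>m Suc k *\<^sub>v Y)"
    proof -
      have "A ^\<^sub>m k *\<^sub>v (Y - x \<cdot>\<^sub>v (A *\<^sub>v Y)) = A ^\<^sub>m k *\<^sub>v Y - A ^\<^sub>m k *\<^sub>v (x \<cdot>\<^sub>v (A *\<^sub>v Y))"
        using Ak Yc Ac by (intro mult_minus_distrib_mat_vec) auto
      also have "A ^\<^sub>m k *\<^sub>v (x \<cdot>\<^sub>v (A *\<^sub>v Y)) = x \<cdot>\<^sub>v (A ^\<^sub>m k *\<^sub>v (A *\<^sub>v Y))"
        using Ak Yc Ac by (intro mult_mat_vec) auto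
      also have "A ^\<^sub>m k *\<^sub>v (A *\<^sub>v Y) = A ^\<^sub>m Suc k *\<^sub>v Y"
        using Ak Yc Ac by (simp add: assoc_mult_mat_vec[of _ d d _ d])
      finally show ?thesis .
    qed
    also have "Cm *\<^sub>v (A ^\<^sub>m k *\<^sub>v Y - x \<cdot>\<^sub>v (A ^\<^sub>m Suc k *\<^sub>v Y))
        = Cm *\<^sub>v (A ^\<^sub>m k *\<^sub>v Y) - x \<cdot>\<^sub>v (Cm *\<^sub>v (A ^\<^sub>m Suc k *\<^sub>v Y))"
    proof -
      have AS: "A ^\<^sub>m Suc k \<in> carrier_mat d d" using Ac by (simp only: carrier_mat_def pow_mat_dim_square) simp
      show ?thesis using Cmc Ak AS Yc
        by (subst mult_minus_distrib_mat_vec[of _ 1 d]) (auto simp: mult_mat_vec[of _ 1 d])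
    qed
    finally have "map_vec complex_of_real (C *\<^sub>v ((P ^\<^sub>m k) *\<^sub>v B))
        = Cm *\<^sub>v (A ^\<^sub>m k *\<^sub>v Y) - x \<cdot>\<^sub>v (Cm *\<^sub>v (A ^\<^sub>m Suc k *\<^sub>v Y))" .
    hence "map_vec complex_of_real (C *\<^sub>v ((P ^\<^sub>m k) *\<^sub>v B)) $ 0 = f k - x * f (Suc k)"
      unfolding f_def using Cmc by simp
    thus ?thesis using Cc by simp
  qed
  have tel: "(\<Sum>k<l. complex_of_real ((C *\<^sub>v ((P ^\<^sub>m k) *\<^sub>v B)) $ 0) * omega l ^ (m * k)) = f 0 - f l"
  proof -
    have "(\<Sum>k<l. complex_of_real ((C *\<^sub>v ((P ^\<^sub>m k) *\<^sub>v B)) $ 0) * omega l ^ (m * k))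
        = (\<Sum>k<l. x ^ k * f k - x ^ Suc k * f (Suc k))"
    proof (intro sum.cong refl)
      fix k
      have pc: "omega l ^ (m * k) = x ^ k" unfolding x_def by (simp add: power_mult)
      show "complex_of_real ((C *\<^sub>v ((P ^\<^sub>m k) *\<^sub>v B)) $ 0) * omega l ^ (m * k)
          = x ^ k * f k - x ^ Suc k * f (Suc k)"
        unfolding hk pc by (simp add: algebra_simps)
    qed
    also have "\<dots> = f 0 - f l" using xl by (subst sum_lessThan_telescope') simp
    finally show ?thesis .
  qed
  have ct: "f 0 - f l = (\<Sum>k<d. complex_of_real (Ct $ k) * Y $ k)"
  proof -
    have Al: "A ^\<^sub>m l \<in> carrier_mat d d" using Ac by (simp only: carrier_mat_def pow_mat_dim_square) simp
    have Pl: "P ^\<^sub>m l \<in> carrier_mat d d" using Pc by (simp only: carrier_mat_def pow_mat_dim_square) simp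
    have IA: "1\<^sub>m d - A ^\<^sub>m l \<in> carrier_mat d d" using Al by (intro minus_carrier_mat) auto
    have IP: "1\<^sub>m d - P ^\<^sub>m l \<in> carrier_mat d d" using Pl by (intro minus_carrier_mat) auto
    have mapIP: "map_mat complex_of_real (1\<^sub>m d - P ^\<^sub>m l) = 1\<^sub>m d - A ^\<^sub>m l"
      unfolding AP of_real_hom.mat_hom_pow[OF Pc, symmetric]
    proof (rule eq_matI)
      have Pr: "dim_row (P ^\<^sub>m l) = d" and Pcl: "dim_col (P ^\<^sub>m l) = d" using Pl by auto
      fix i j assume "i < dim_row (1\<^sub>m d - map_mat complex_of_real (P ^\<^sub>m l))"
        "j < dim_col (1\<^sub>m d - map_mat complex_of_real (P ^\<^sub>m l))"
      hence ij: "i < d" "j < d" using Pr Pcl by simp_all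
      show "map_mat complex_of_real (1\<^sub>m d - P ^\<^sub>m l) $$ (i, j) =
        (1\<^sub>m d - map_mat complex_of_real (P ^\<^sub>m l)) $$ (i, j)"
        using ij Pr Pcl by simp
    qed (use Pl in auto)
    have f0: "f 0 = (Cm *\<^sub>v Y) $ 0" unfolding f_def using Ac Yc by simp
    have "Cm *\<^sub>v Y - Cm *\<^sub>v (A ^\<^sub>m l *\<^sub>v Y) = Cm *\<^sub>v (Y - A ^\<^sub>m l *\<^sub>v Y)"
      using Cmc Al Yc by (subst mult_minus_distrib_mat_vec[of _ 1 d]) auto
    also have "Y - A ^\<^sub>m l *\<^sub>v Y = (1\<^sub>m d - A ^\<^sub>m l) *\<^sub>v Y"
      using Al Yc by (subst minus_mult_distrib_mat_vec) auto
    also have "Cm *\<^sub>v ((1\<^sub>m d - A ^\<^sub>m l) *\<^sub>v Y) = (Cm * (1\<^sub>m d - A ^\<^sub>m l)) *\<^sub>v Y"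
      using Cmc IA Yc by (simp add: assoc_mult_mat_vec[of _ 1 d _ d])
    finally have eq: "Cm *\<^sub>v Y - Cm *\<^sub>v (A ^\<^sub>m l *\<^sub>v Y) = (Cm * (1\<^sub>m d - A ^\<^sub>m l)) *\<^sub>v Y" .
    have dl: "0 < dim_vec (Cm *\<^sub>v (A ^\<^sub>m l *\<^sub>v Y))" using Cmc by simp
    have "f 0 - f l = (Cm *\<^sub>v Y - Cm *\<^sub>v (A ^\<^sub>m l *\<^sub>v Y)) $ 0"
      unfolding f0 index_minus_vec(1)[OF dl] by (simp only: f_def)
    hence "f 0 - f l = ((Cm * (1\<^sub>m d - A ^\<^sub>m l)) *\<^sub>v Y) $ 0" unfolding eq .
    also have "\<dots> = (\<Sum>k<d. row (Cm * (1\<^sub>m d - A ^\<^sub>m l)) 0 $ k * Y $ k)"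
    proof -
      have r0: "0 < dim_row (Cm * (1\<^sub>m d - A ^\<^sub>m l))" using Cmc by simp
      have dY: "dim_vec Y = d" using Yc by simp
      show ?thesis by (simp only: index_mult_mat_vec[OF r0] scalar_prod_def dY lessThan_atLeast0)
    qed
    also have "\<dots> = (\<Sum>k<d. complex_of_real (Ct $ k) * Y $ k)"
      unfolding Ct_def P_def[symmetric]
      by (intro sum.cong refl) (simp add: map_row[OF Cc IP] mapIP Cm_def)
    finally show ?thesis .
  qed
  have gf: "g = (\<lambda>j. Bc j + (x * s) * ac j)" by (rule ext) (simp add: g_def)
  have "(\<Sum>k<d. complex_of_real (Ct $ k) * Y $ k)
      = (\<Sum>k<d. complex_of_real (Ct $ k) * (tri x Bc k + (x * s) * tri x ac k))"
    by (intro sum.cong refl) (simp add: Y_def gf tri_lin)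
  also have "\<dots> = quad d l Ct B $ m + x * s * quad d l Ct a $ m"
    unfolding quad_tri[OF l1 ml] x_def[symmetric] Bc_def ac_def
    by (simp add: sum.distrib sum_distrib_left algebra_simps)
  finally have "(\<Sum>k<d. complex_of_real (Ct $ k) * Y $ k)
      = quad d l Ct B $ m + x * s * quad d l Ct a $ m" .
  hence "(\<Sum>k<l. complex_of_real ((C *\<^sub>v ((P ^\<^sub>m k) *\<^sub>v B)) $ 0) * omega l ^ (m * k))
     = quad d l Ct B $ m + x * s * quad d l Ct a $ m" using tel ct by simp
  moreover have "x * s * quad d l Ct a $ m = quad d l Ct a $ m * q3 / (1 / x - q4)"
    using xnz nd unfolding s_def by (simp add: field_simps)
  ultimately show ?thesis unfolding Q3 Q4 z by (simp add: Ct_def P_def)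
qed



theorem theorem1:
  fixes d l :: nat and a B :: "real vec" and C :: "real mat"
  assumes "d \<ge> 1" and "l \<ge> 1"
    and "dim_vec a = d" and "dim_vec B = d" and "C \<in> carrier_mat 1 d"
    and "\<forall>m<l. invertible_mat (1\<^sub>m d - omega l ^ m \<cdot>\<^sub>m map_mat complex_of_real (companion d a))"
  shows "algorithm1 d l a B C =
         vec l (\<lambda>k. complex_of_real ((C *\<^sub>v ((companion d a ^\<^sub>m k) *\<^sub>v B)) $ 0))"
proof -
  have "algorithm1 d l a B C = idft l (vec l (\<lambda>m. \<Sum>k<l. complex_of_real ((C *\<^sub>v ((companion d a ^\<^sub>m k) *\<^sub>v B)) $ 0) * omega l ^ (m * k)))"
    unfolding algorithm1_def Let_def
  proof (intro arg_cong[where f = "idft l"] eq_vecI)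
    fix m assume "m < dim_vec (vec l (\<lambda>m. \<Sum>k<l. complex_of_real ((C *\<^sub>v ((companion d a ^\<^sub>m k) *\<^sub>v B)) $ 0) * omega l ^ (m * k)))"
    hence m: "m < l" by simp
    have inv: "invertible_mat (1\<^sub>m d - omega l ^ m \<cdot>\<^sub>m Acm d a)"
      using assms(6) m unfolding Acm_def by simp
    show "vec l (\<lambda>m. quad d l (row (C * (1\<^sub>m d - companion d a ^\<^sub>m l)) 0) B $ m +
              quad d l (row (C * (1\<^sub>m d - companion d a ^\<^sub>m l)) 0) a $ m *
              quad d l (unit_vec d (d - 1)) B $ m /
              (vec l (\<lambda>m. cnj (omega l) ^ m) $ m - quad d l (unit_vec d (d - 1)) a $ m)) $ m =
          vec l (\<lambda>m. \<Sum>k<l. complex_of_real ((C *\<^sub>v ((companion d a ^\<^sub>m k) *\<^sub>v B)) $ 0) * omega l ^ (m * k)) $ m"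
      using main_m[OF assms(1,2) m assms(3,4,5) inv] m by simp
  qed simp
  also have "\<dots> = vec l (\<lambda>k. complex_of_real ((C *\<^sub>v ((companion d a ^\<^sub>m k) *\<^sub>v B)) $ 0))"
    by (rule idft_dft[OF assms(2)])
  finally show ?thesis .
qed

end
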